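(* Let $f:\mathbb{R}^n\to(-\infty,+\infty]$ be proper, lower semicontinuous and prox-bounded with threshold $\lambda_f>0$. Then (i) $\operatorname{dom}\partial_p^\lambda f\ne\varnothing$ for every $0<\lambda<\lambda_f$; (ii) $\lambda_f=\sup\{\lambda>0:\operatorname{dom}\partial_p^\lambda f\ne\varnothing\}$.
   Context: Prox-bounded with threshold $\lambda_f=\sup\{\lambda>0:\inf_y\{f(y)+\frac1{2\lambda}\|y-x\|^2\}>-\infty\text{ for some }x\}$. $v\in\partial_p^\lambda f(x)$ iff $x\in\operatorname{dom}f$ and $f(y)\ge f(x)+\langle v,y-x\rangle-\frac1{2\lambda}\|y-x\|^2$ for all $y$; $\operatorname{dom}\partial_p^\lambda f=\{x:\partial_p^\lambda f(x)\ne\varnothing\}$. *)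

theory Defs
  imports "HOL-Analysis.Analysis"
begin

text \<open>Extended-real-valued functions f : R^n -> (-inf, +inf], modelled as
  functions into ereal that never take the value -inf.\<close>

definition proper_fun :: "('a::euclidean_space \<Rightarrow> ereal) \<Rightarrow> bool" where
  "proper_fun f \<longleftrightarrow> (\<forall>x. f x \<noteq> -\<infinity>) \<and> (\<exists>x. f x < \<infinity>)"

definition lsc_fun :: "('a::euclidean_space \<Rightarrow> ereal) \<Rightarrow> bool" where
  "lsc_fun f \<longleftrightarrow> (\<forall>x. f x \<le> Liminf (at x) f)"

definition prox_lambdas :: "('a::euclidean_space \<Rightarrow> ereal) \<Rightarrow> real set" where
  "prox_lambdas f = {lam. lam > 0 \<and>
     (\<exists>x. (INF y. f y + ereal (norm (y - x) ^ 2 / (2 * lam))) > -\<infinity>)}"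

definition prox_bounded :: "('a::euclidean_space \<Rightarrow> ereal) \<Rightarrow> bool" where
  "prox_bounded f \<longleftrightarrow> prox_lambdas f \<noteq> {}"

definition prox_threshold :: "('a::euclidean_space \<Rightarrow> ereal) \<Rightarrow> ereal" where
  "prox_threshold f = (SUP lam\<in>prox_lambdas f. ereal lam)"

definition prox_subdiff :: "real \<Rightarrow> ('a::euclidean_space \<Rightarrow> ereal) \<Rightarrow> 'a \<Rightarrow> 'a set" where
  "prox_subdiff lam f x = {v. f x < \<infinity> \<and>
     (\<forall>y. f y \<ge> f x + ereal (inner v (y - x) - norm (y - x) ^ 2 / (2 * lam)))}"

definition dom_prox_subdiff :: "real \<Rightarrow> ('a::euclidean_space \<Rightarrow> ereal) \<Rightarrow> 'a set" where
  "dom_prox_subdiff lam f = {x. prox_subdiff lam f x \<noteq> {}}"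

end

theory Submission
  imports Defs
begin

lemma lsc_eventually:
  assumes "lsc_fun f" and "a < f y"
  shows "eventually (\<lambda>z. a < f z) (nhds y)"
proof -
  have "f y \<le> Liminf (at y) f" using assms(1) unfolding lsc_fun_def by blast
  hence "eventually (\<lambda>z. a < f z) (at y)" using assms(2) le_Liminf_iff by blast
  hence "eventually (\<lambda>z. z \<noteq> y \<longrightarrow> a < f z) (nhds y)"
    by (simp add: eventually_at_filter)
  thus ?thesis by (rule eventually_mono) (use assms(2) in auto)
qed

lemma closed_sublevel:
  fixes f :: "'a::euclidean_space \<Rightarrow> ereal"
  assumes lsc: "lsc_fun f" and cont: "continuous_on UNIV h"
  shows "closed {y. f y + ereal (h y) \<le> ereal t}"
  unfolding closed_sequential_limits
proof (intro allI impI, elim conjE)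
  fix x :: "nat \<Rightarrow> 'a" and l
  assume mem: "\<forall>n. x n \<in> {y. f y + ereal (h y) \<le> ereal t}" and lim: "x \<longlonglongrightarrow> l"
  show "l \<in> {y. f y + ereal (h y) \<le> ereal t}"
  proof (rule ccontr)
    assume "l \<notin> {y. f y + ereal (h y) \<le> ereal t}"
    hence gt: "ereal t < f l + ereal (h l)" by auto
    have "ereal (t - h l) < f l"
    proof (cases "f l")
      case (real r) thus ?thesis using gt by auto
    next
      case PInf thus ?thesis by auto
    next
      case MInf thus ?thesis using gt by auto
    qed
    then obtain a where a1: "ereal (t - h l) < ereal a" and a2: "ereal a < f l"
      using ereal_dense2 by blast
    have e1: "eventually (\<lambda>z. ereal a < f z) (nhds l)" using lsc_eventually[OF lsc a2] .
    have "(h \<longlongrightarrow> h l) (nhds l)" using cont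
      by (metis UNIV_I continuous_on_def open_UNIV at_within_open tendsto_at_iff_tendsto_nhds)
    hence e2: "eventually (\<lambda>z. t - a < h z) (nhds l)" using a1 by (intro order_tendstoD(1)) auto
    have "eventually (\<lambda>z. ereal t < f z + ereal (h z)) (nhds l)"
      using e1 e2
    proof (rule eventually_elim2)
      fix z assume A: "ereal a < f z" and B: "t - a < h z"
      show "ereal t < f z + ereal (h z)"
      proof (cases "f z")
        case (real r) thus ?thesis using A B by auto
      next
        case PInf thus ?thesis by auto
      next
        case MInf thus ?thesis using A by auto
      qed
    qed
    hence "eventually (\<lambda>n. ereal t < f (x n) + ereal (h (x n))) sequentially"
      using lim unfolding filterlim_iff by blast
    hence "eventually (\<lambda>n. False) sequentially"
      by (rule eventually_mono) (use mem in \<open>auto simp: not_le[symmetric]\<close>)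
    thus False by simp
  qed
qed

lemma exists_min:
  fixes f :: "'a::euclidean_space \<Rightarrow> ereal"
  assumes lsc: "lsc_fun f" and nm: "\<forall>y. f y \<noteq> -\<infinity>" and x1: "f x1 < \<infinity>"
    and lp: "0 < lam" and lm: "lam < mu"
    and lb: "\<forall>y. ereal c \<le> f y + ereal (norm (y - x0) ^ 2 / (2 * mu))"
  shows "\<exists>ys. \<forall>z. f ys + ereal (norm (ys - x0) ^ 2 / (2 * lam))
                   \<le> f z + ereal (norm (z - x0) ^ 2 / (2 * lam))"
proof -
  define h where "h z = norm (z - x0) ^ 2 / (2 * lam)" for z
  define g where "g z = f z + ereal (h z)" for z
  define d where "d = 1 / (2 * lam) - 1 / (2 * mu)"
  have dpos: "d > 0" using lp lm unfolding d_def by (simp add: field_simps)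
  have cont: "continuous_on UNIV h" unfolding h_def using lp by (intro continuous_intros) auto
  have glb: "ereal (c + d * norm (z - x0) ^ 2) \<le> g z" for z
  proof (cases "f z")
    case (real r)
    have "c \<le> r + norm (z - x0) ^ 2 / (2 * mu)" using lb[rule_format, of z] real by simp
    moreover have "norm (z - x0) ^ 2 / (2 * lam) = norm (z - x0) ^ 2 / (2 * mu) + d * norm (z - x0) ^ 2"
      unfolding d_def by (simp add: field_simps)
    ultimately show ?thesis unfolding g_def h_def using real by simp
  next
    case PInf thus ?thesis unfolding g_def by simp
  next
    case MInf thus ?thesis using nm by simp
  qed
  define I where "I = (INF z. g z)"
  have "ereal c \<le> I" unfolding I_def
  proof (rule INF_greatest)
    fix z
    have "ereal c \<le> ereal (c + d * norm (z - x0) ^ 2)" using dpos by simp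
    thus "ereal c \<le> g z" using glb[of z] by (rule order_trans)
  qed
  moreover have "I < \<infinity>"
  proof -
    have "I \<le> g x1" unfolding I_def by (rule INF_lower) simp
    moreover have "g x1 < \<infinity>" unfolding g_def using x1 by simp
    ultimately show ?thesis by (rule le_less_trans)
  qed
  ultimately obtain i where Ii: "I = ereal i" by (cases I) auto
  have "\<forall>n. \<exists>y. g y < ereal (i + inverse (real (Suc n)))"
  proof
    fix n
    have "I < ereal (i + inverse (real (Suc n)))" using Ii by simp
    thus "\<exists>y. g y < ereal (i + inverse (real (Suc n)))" unfolding I_def INF_less_iff by blast
  qed
  then obtain y where y: "\<And>n. g (y n) < ereal (i + inverse (real (Suc n)))" by metis
  define K where "K = {z. g z \<le> ereal (i + 1)}"
  have clK: "closed K" unfolding K_def g_def by (rule closed_sublevel[OF lsc cont])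
  have "K \<subseteq> cball x0 (sqrt ((i + 1 - c) / d))"
  proof
    fix z assume "z \<in> K"
    hence "ereal (c + d * norm (z - x0) ^ 2) \<le> ereal (i + 1)" using glb[of z] unfolding K_def
      by (metis mem_Collect_eq order_trans)
    hence "d * norm (z - x0) ^ 2 \<le> i + 1 - c" by simp
    hence "norm (z - x0) ^ 2 \<le> (i + 1 - c) / d" using dpos by (simp add: field_simps)
    hence "norm (z - x0) \<le> sqrt ((i + 1 - c) / d)" by (simp add: real_le_rsqrt)
    thus "z \<in> cball x0 (sqrt ((i + 1 - c) / d))" by (simp add: dist_norm norm_minus_commute)
  qed
  hence "bounded K" using bounded_cball bounded_subset by blast
  hence "compact K" using clK by (simp add: compact_eq_bounded_closed)
  hence sc: "seq_compact K" by (rule compact_imp_seq_compact)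
  have yK: "\<forall>n. y n \<in> K"
  proof
    fix n
    have "inverse (real (Suc n)) \<le> 1" by (simp add: inverse_le_1_iff)
    hence "ereal (i + inverse (real (Suc n))) \<le> ereal (i + 1)" by simp
    thus "y n \<in> K" unfolding K_def using y[of n] by (metis mem_Collect_eq less_imp_le order_trans)
  qed
  then obtain l r where lK: "l \<in> K" and r: "strict_mono r" and lim: "(y \<circ> r) \<longlonglongrightarrow> l"
    using sc unfolding seq_compact_def by metis
  have gl: "g l \<le> ereal (i + inverse (real (Suc k)))" for k
  proof -
    have "l \<in> {z. g z \<le> ereal (i + inverse (real (Suc k)))}"
    proof (rule Lim_in_closed_set[OF _ _ _ lim])
      show "closed {z. g z \<le> ereal (i + inverse (real (Suc k)))}"
        unfolding g_def by (rule closed_sublevel[OF lsc cont])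
      show "sequentially \<noteq> bot" by simp
      show "eventually (\<lambda>n. (y \<circ> r) n \<in> {z. g z \<le> ereal (i + inverse (real (Suc k)))}) sequentially"
        unfolding eventually_sequentially
      proof (intro exI allI impI)
        fix n assume "k \<le> n"
        hence "k \<le> r n" using seq_suble[OF r, of n] by simp
        hence "inverse (real (Suc (r n))) \<le> inverse (real (Suc k))"
          by (simp add: field_simps)
        hence "ereal (i + inverse (real (Suc (r n)))) \<le> ereal (i + inverse (real (Suc k)))" by simp
        thus "(y \<circ> r) n \<in> {z. g z \<le> ereal (i + inverse (real (Suc k)))}"
          using y[of "r n"] by (metis comp_apply mem_Collect_eq less_imp_le order_trans)
      qed
    qed
    thus ?thesis by simp
  qed
  have "g l \<le> I"
  proof (rule ccontr)
    assume "\<not> g l \<le> I"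
    hence lt: "ereal i < g l" using Ii by simp
    have "g l \<le> ereal (i + 1)" using lK unfolding K_def by simp
    with lt obtain gv where gv: "g l = ereal gv" by (cases "g l") auto
    hence "0 < gv - i" using lt by simp
    then obtain k where "inverse (real (Suc k)) < gv - i" using reals_Archimedean by blast
    thus False using gl[of k] gv by simp
  qed
  hence "\<forall>z. g l \<le> g z" unfolding I_def by (metis INF_lower UNIV_I order_trans)
  thus ?thesis unfolding g_def h_def by blast
qed


lemma min_subdiff:
  fixes f :: "'a::euclidean_space \<Rightarrow> ereal"
  assumes lp: "0 < lam" and fin: "f ys < \<infinity>" and nmy: "f ys \<noteq> -\<infinity>"
    and mn: "\<forall>z. f ys + ereal (norm (ys - x0) ^ 2 / (2 * lam))
                   \<le> f z + ereal (norm (z - x0) ^ 2 / (2 * lam))"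
  shows "(x0 - ys) /\<^sub>R lam \<in> prox_subdiff lam f ys"
  unfolding prox_subdiff_def
proof (intro CollectI conjI allI fin)
  fix z
  show "f ys + ereal (inner ((x0 - ys) /\<^sub>R lam) (z - ys) - norm (z - ys) ^ 2 / (2 * lam)) \<le> f z"
  proof (cases "f z")
    case PInf thus ?thesis by simp
  next
    case MInf
    with mn[rule_format, of z] fin show ?thesis by auto
  next
    case (real b)
    from nmy fin obtain a where a: "f ys = ereal a"
      by (cases "f ys") auto
    have ineq: "a + norm (ys - x0) ^ 2 / (2 * lam) \<le> b + norm (z - x0) ^ 2 / (2 * lam)"
      using mn[rule_format, of z] real a by simp
    have id: "norm (z - x0) ^ 2 = norm (z - ys) ^ 2 + 2 * inner (z - ys) (ys - x0) + norm (ys - x0) ^ 2"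
      by (simp add: power2_norm_eq_inner inner_diff_left inner_diff_right inner_commute algebra_simps)
    have id2: "inner ((x0 - ys) /\<^sub>R lam) (z - ys) = - inner (z - ys) (ys - x0) / lam"
      by (simp add: inner_commute inner_diff_left inner_diff_right algebra_simps divide_simps)
    have "a + (- inner (z - ys) (ys - x0) / lam - norm (z - ys) ^ 2 / (2 * lam)) \<le> b"
    proof -
      have "norm (z - x0) ^ 2 / (2 * lam) = norm (z - ys) ^ 2 / (2 * lam) + inner (z - ys) (ys - x0) / lam + norm (ys - x0) ^ 2 / (2 * lam)"
        using lp unfolding id by (simp add: field_simps)
      thus ?thesis using ineq by simp
    qed
    thus ?thesis using a real id2 by simp
  qed
qed

lemma subdiff_prox_lambdas:
  fixes f :: "'a::euclidean_space \<Rightarrow> ereal"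
  assumes nm: "\<forall>y. f y \<noteq> -\<infinity>" and lp: "0 < lam" and v: "v \<in> prox_subdiff lam f x"
  shows "lam \<in> prox_lambdas f"
proof -
  from v have fin: "f x < \<infinity>" and ineq: "\<forall>y. f y \<ge> f x + ereal (inner v (y - x) - norm (y - x) ^ 2 / (2 * lam))"
    unfolding prox_subdiff_def by auto
  from fin nm obtain a where a: "f x = ereal a" by (cases "f x") auto
  define z where "z = x + lam *\<^sub>R v"
  have "ereal (a + lam * norm v ^ 2 / 2) \<le> (INF y. f y + ereal (norm (y - z) ^ 2 / (2 * lam)))"
  proof (rule INF_greatest)
    fix y
    show "ereal (a + lam * norm v ^ 2 / 2) \<le> f y + ereal (norm (y - z) ^ 2 / (2 * lam))"
    proof (cases "f y")
      case PInf thus ?thesis by simp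
    next
      case MInf thus ?thesis using nm by simp
    next
      case (real b)
      have i1: "a + (inner v (y - x) - norm (y - x) ^ 2 / (2 * lam)) \<le> b"
        using ineq[rule_format, of y] a real by simp
      have id: "norm (y - z) ^ 2 = norm (y - x) ^ 2 - 2 * lam * inner v (y - x) + lam ^ 2 * norm v ^ 2"
        unfolding z_def power2_norm_eq_inner
        by (simp add: inner_diff_left inner_diff_right inner_add_left inner_add_right inner_commute algebra_simps power2_eq_square)
      have "norm (y - z) ^ 2 / (2 * lam) = norm (y - x) ^ 2 / (2 * lam) - inner v (y - x) + lam * norm v ^ 2 / 2"
        using lp unfolding id by (simp add: field_simps power2_eq_square)
      thus ?thesis using i1 real by simp
    qed
  qed
  hence "-\<infinity> < (INF y. f y + ereal (norm (y - z) ^ 2 / (2 * lam)))"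
    by (rule less_le_trans[rotated]) simp
  thus ?thesis unfolding prox_lambdas_def using lp by blast
qed

theorem mainTheorem15:
  fixes f :: "'a::euclidean_space \<Rightarrow> ereal"
  assumes "proper_fun f" and "lsc_fun f" and "prox_bounded f"
    and "prox_threshold f > 0"
  shows "(\<forall>lam::real. 0 < lam \<and> ereal lam < prox_threshold f \<longrightarrow> dom_prox_subdiff lam f \<noteq> {})
    \<and> prox_threshold f = (SUP lam\<in>{lam::real. lam > 0 \<and> dom_prox_subdiff lam f \<noteq> {}}. ereal lam)"
proof -
  from assms(1) have nm: "\<forall>y. f y \<noteq> -\<infinity>" and "\<exists>x1. f x1 < \<infinity>" unfolding proper_fun_def by auto
  then obtain x1 where x1: "f x1 < \<infinity>" by blast
  have part1: "dom_prox_subdiff lam f \<noteq> {}" if lp: "0 < lam" and lt: "ereal lam < prox_threshold f" for lam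
  proof -
    from lt obtain mu where mu: "mu \<in> prox_lambdas f" and lm: "lam < mu"
      unfolding prox_threshold_def less_SUP_iff by auto
    from mu obtain x0 where x0: "-\<infinity> < (INF y. f y + ereal (norm (y - x0) ^ 2 / (2 * mu)))"
      unfolding prox_lambdas_def by blast
    define m where "m = (INF y. f y + ereal (norm (y - x0) ^ 2 / (2 * mu)))"
    have "m \<le> f x1 + ereal (norm (x1 - x0) ^ 2 / (2 * mu))" unfolding m_def by (rule INF_lower) simp
    moreover have "f x1 + ereal (norm (x1 - x0) ^ 2 / (2 * mu)) < \<infinity>" using x1 by simp
    ultimately have "m < \<infinity>" by (rule le_less_trans)
    with x0 obtain c where c: "m = ereal c" unfolding m_def[symmetric] by (cases m) auto
    have lb: "\<forall>y. ereal c \<le> f y + ereal (norm (y - x0) ^ 2 / (2 * mu))"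
      using c unfolding m_def by (metis INF_lower UNIV_I)
    obtain ys where ys: "\<forall>z. f ys + ereal (norm (ys - x0) ^ 2 / (2 * lam))
                   \<le> f z + ereal (norm (z - x0) ^ 2 / (2 * lam))"
      using exists_min[OF assms(2) nm x1 lp lm lb] by blast
    have "f ys + ereal (norm (ys - x0) ^ 2 / (2 * lam)) < \<infinity>"
      by (rule le_less_trans[OF ys[rule_format, of x1]]) (use x1 in simp)
    hence fin: "f ys < \<infinity>" by (cases "f ys") auto
    have "(x0 - ys) /\<^sub>R lam \<in> prox_subdiff lam f ys" using nm by (intro min_subdiff[OF lp fin _ ys]) auto
    thus ?thesis unfolding dom_prox_subdiff_def by blast
  qed
  define S where "S = {lam::real. lam > 0 \<and> dom_prox_subdiff lam f \<noteq> {}}"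
  have sub: "S \<subseteq> prox_lambdas f"
    unfolding S_def dom_prox_subdiff_def using subdiff_prox_lambdas[OF nm] by blast
  have le1: "(SUP lam\<in>S. ereal lam) \<le> prox_threshold f"
    unfolding prox_threshold_def using sub by (rule SUP_subset_mono) simp
  have le2: "prox_threshold f \<le> (SUP lam\<in>S. ereal lam)"
  proof (rule ccontr)
    assume "\<not> ?thesis"
    hence lt: "(SUP lam\<in>S. ereal lam) < prox_threshold f" by simp
    from assms(4) obtain r0 where r0: "0 < ereal r0" "ereal r0 < prox_threshold f" using ereal_dense2 by blast
    have "r0 \<in> S" unfolding S_def using part1 r0 by auto
    hence s0: "ereal r0 \<le> (SUP lam\<in>S. ereal lam)" by (rule SUP_upper)
    from lt obtain r where r: "(SUP lam\<in>S. ereal lam) < ereal r" "ereal r < prox_threshold f"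
      using ereal_dense2 by blast
    have "0 < ereal r" using r0(1) s0 r(1) by (meson less_le_trans order.strict_trans)
    hence "0 < r" by simp
    hence "r \<in> S" unfolding S_def using part1 r(2) by auto
    hence "ereal r \<le> (SUP lam\<in>S. ereal lam)" by (rule SUP_upper)
    thus False using r(1) by simp
  qed
  show ?thesis using part1 le1 le2 unfolding S_def by auto
qed

end
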